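(* Assume $N\ge2$ and that conditions A, D' and E' hold for the semi-Markov processes $\eta^{(\varepsilon)}(t)$, $\varepsilon\in(0,\varepsilon_0]$, together with the paper's standing regularity conditions on the semi-Markov kernels, and let $\delta^*=\min_{i\in\mathbb{X},\,j\in\mathbb{Y}_i}(\delta_{ij}\wedge\dot\delta_{ij})$. Then for every $r\in\mathbb{X}$ the reduced semi-Markov processes ${}_r\eta^{(\varepsilon)}(t)$ satisfy conditions A and D' (with transition probabilities ${}_rp_{ij}$ and sets ${}_r\mathbb{Y}_i$, same $\varepsilon_0$) and the same standing regularity conditions, and they satisfy condition E': for every $i\in{}_r\mathbb{X}$, $j\in{}_r\mathbb{Y}_i$ there are integers ${}_rm^-_{ij}\le{}_rm^+_{ij}$, reals ${}_rb_{ij}[l]$ with ${}_rb_{ij}[{}_rm^-_{ij}]>0$, and ${}_r\dot\delta_{ij}\in(0,1]$, ${}_r\dot G_{ij}\in(0,\infty)$, ${}_r\dot\varepsilon_{ij}\in(0,\varepsilon_0]$ such that $\big|{}_re_{ij}(\varepsilon)-\sum_{l={}_rm^-_{ij}}^{{}_rm^+_{ij}}{}_rb_{ij}[l]\varepsilon^l\big|\le{}_r\dot G_{ij}\varepsilon^{{}_rm^+_{ij}+{}_r\dot\delta_{ij}}$ for $0<\varepsilon\le{}_r\dot\varepsilon_{ij}$. Moreover this holds with ${}_r\dot\delta_{ij}\ge\delta^*$ for all $j\in{}_r\mathbb{Y}_i$, $i\in{}_r\mathbb{X}$, $r\in\mathbb{X}$.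
   Context: Let $\mathbb{X}=\{1,\dots,N\}$, $0<\varepsilon_0\le1$. For each $\varepsilon\in(0,\varepsilon_0]$, $\eta^{(\varepsilon)}(t)$ is a semi-Markov process on $\mathbb{X}$ with semi-Markov transition probabilities $Q^{(\varepsilon)}_{ij}(t)$; $p_{ij}(\varepsilon)=Q^{(\varepsilon)}_{ij}(\infty)$ are the transition probabilities of the embedded Markov chain and $e_{ij}(\varepsilon)=\int_0^\infty t\,Q^{(\varepsilon)}_{ij}(dt)$ the (finite) expectations of sojourn times. The paper also assumes standing regularity conditions on $Q^{(\varepsilon)}_{ij}$ guaranteeing a well-defined process with finite $e_{ij}(\varepsilon)$; the claim concerns only $p_{ij}$ and $e_{ij}$. Condition A: there are nonempty $\mathbb{Y}_i\subseteq\mathbb{X}$ with (a) $p_{ij}(\varepsilon)>0$ for $j\in\mathbb{Y}_i$; (b) $p_{ij}(\varepsilon)=0$ (hence $e_{ij}(\varepsilon)=0$) for $j\notin\mathbb{Y}_i$; (c) for all $i,j$ there are $n\ge1$ and $i=l_0,\dots,l_n=j$ with $l_m\in\mathbb{Y}_{l_{m-1}}$. Condition D': for $j\in\mathbb{Y}_i$, $p_{ij}(\varepsilon)=\sum_{l=l^-_{ij}}^{l^+_{ij}}a_{ij}[l]\varepsilon^l+o_{ij}(\varepsilon)$ with integers $0\le l^-_{ij}\le l^+_{ij}$, $a_{ij}[l^-_{ij}]>0$, $|o_{ij}(\varepsilon)|\le G_{ij}\varepsilon^{l^+_{ij}+\delta_{ij}}$ for $0<\varepsilon\le\varepsilon_{ij}$,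 $\delta_{ij}\in(0,1]$, $G_{ij}\in(0,\infty)$, $\varepsilon_{ij}\in(0,\varepsilon_0]$. Condition E': for $j\in\mathbb{Y}_i$, $e_{ij}(\varepsilon)=\sum_{l=m^-_{ij}}^{m^+_{ij}}b_{ij}[l]\varepsilon^l+\dot o_{ij}(\varepsilon)$ with integers $m^-_{ij}\le m^+_{ij}$, $b_{ij}[m^-_{ij}]>0$, $|\dot o_{ij}(\varepsilon)|\le\dot G_{ij}\varepsilon^{m^+_{ij}+\dot\delta_{ij}}$ for $0<\varepsilon\le\dot\varepsilon_{ij}$, $\dot\delta_{ij}\in(0,1]$, $\dot G_{ij}\in(0,\infty)$, $\dot\varepsilon_{ij}\in(0,\varepsilon_0]$. Reduced process: for $r\in\mathbb{X}$, ${}_r\eta^{(\varepsilon)}(t)$ is the semi-Markov process on ${}_r\mathbb{X}=\mathbb{X}\setminus\{r\}$ obtained by observing $\eta^{(\varepsilon)}$ only at jump times into ${}_r\mathbb{X}$ (excursions through $r$ are absorbed into sojourn times); its embedded transition probabilities are ${}_rp_{ij}=p_{ij}+p_{ir}\frac{p_{rj}}{1-p_{rr}}$ and its sojourn expectations are ${}_re_{ij}=e_{ij}+e_{ir}\frac{p_{rj}}{1-p_{rr}}+e_{rr}\frac{p_{ir}}{1-p_{rr}}\frac{p_{rj}}{1-p_{rr}}+e_{rj}\frac{p_{ir}}{1-p_{rr}}$ (all functions of $\varepsilon$), $i,j\in{}_r\mathbb{X}$; its transition sets are ${}_r\mathbb{Y}_i=\{j\in{}_r\mathbb{X}: j\in\mathbb{Y}_i\text{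 or }(r\in\mathbb{Y}_i\text{ and }j\in\mathbb{Y}_r)\}$. *)

theory Defs
  imports Complex_Main
begin

text \<open>Transition probabilities and expectations are modelled as functions
  of (epsilon, i, j).\<close>

type_synonym kern = "real \<Rightarrow> nat \<Rightarrow> nat \<Rightarrow> real"

definition condA :: "nat set \<Rightarrow> real \<Rightarrow> kern \<Rightarrow> (nat \<Rightarrow> nat set) \<Rightarrow> bool" where
  "condA S eps0 p Y \<longleftrightarrow>
     (\<forall>i\<in>S. Y i \<noteq> {} \<and> Y i \<subseteq> S) \<and>
     (\<forall>eps. 0 < eps \<and> eps \<le> eps0 \<longrightarrow>
        (\<forall>i\<in>S. \<forall>j\<in>S. (j \<in> Y i \<longrightarrow> p eps i j > 0) \<and> (j \<notin> Y i \<longrightarrow> p eps i j = 0))) \<and>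
     (\<forall>i\<in>S. \<forall>j\<in>S. \<exists>n::nat. n \<ge> 1 \<and> (\<exists>l::nat \<Rightarrow> nat.
        l 0 = i \<and> l n = j \<and> (\<forall>m\<in>{1..n}. l m \<in> Y (l (m - 1)))))"

text \<open>Standing regularity conditions, as far as they concern p and e:
  p(eps) is a stochastic matrix on S, e is nonnegative and vanishes where p vanishes.\<close>
definition smp_regular :: "nat set \<Rightarrow> real \<Rightarrow> kern \<Rightarrow> kern \<Rightarrow> bool" where
  "smp_regular S eps0 p e \<longleftrightarrow>
     (\<forall>eps. 0 < eps \<and> eps \<le> eps0 \<longrightarrow>
        (\<forall>i\<in>S. (\<forall>j\<in>S. 0 \<le> p eps i j \<and> 0 \<le> e eps i j \<and> (p eps i j = 0 \<longrightarrow> e eps i j = 0))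
              \<and> (\<Sum>j\<in>S. p eps i j) = 1))"

definition has_expansion ::
  "real \<Rightarrow> (real \<Rightarrow> real) \<Rightarrow> int \<Rightarrow> int \<Rightarrow> (int \<Rightarrow> real) \<Rightarrow> real \<Rightarrow> real \<Rightarrow> real \<Rightarrow> bool" where
  "has_expansion eps0 f lm lp a delta G eps1 \<longleftrightarrow>
     lm \<le> lp \<and> a lm > 0 \<and> 0 < delta \<and> delta \<le> 1 \<and> 0 < G \<and> 0 < eps1 \<and> eps1 \<le> eps0 \<and>
     (\<forall>eps. 0 < eps \<and> eps \<le> eps1 \<longrightarrow>
        \<bar>f eps - (\<Sum>l\<in>{lm..lp}. a l * eps powi l)\<bar> \<le> G * eps powr (real_of_int lp + delta))"

definition condD' :: "nat set \<Rightarrow> real \<Rightarrow> kern \<Rightarrow> (nat \<Rightarrow> nat set) \<Rightarrow> bool" where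
  "condD' S eps0 p Y \<longleftrightarrow> (\<forall>i\<in>S. \<forall>j\<in>Y i. \<exists>lm lp a delta G eps1.
      0 \<le> lm \<and> has_expansion eps0 (\<lambda>eps. p eps i j) lm lp a delta G eps1)"

definition red_p :: "kern \<Rightarrow> nat \<Rightarrow> kern" where
  "red_p p r eps i j = p eps i j + p eps i r * (p eps r j / (1 - p eps r r))"

definition red_e :: "kern \<Rightarrow> kern \<Rightarrow> nat \<Rightarrow> kern" where
  "red_e p e r eps i j =
     e eps i j + e eps i r * (p eps r j / (1 - p eps r r))
     + e eps r r * (p eps i r / (1 - p eps r r)) * (p eps r j / (1 - p eps r r))
     + e eps r j * (p eps i r / (1 - p eps r r))"

definition red_Y :: "nat set \<Rightarrow> (nat \<Rightarrow> nat set) \<Rightarrow> nat \<Rightarrow> nat \<Rightarrow> nat set" where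
  "red_Y S Y r i = {j \<in> S - {r}. j \<in> Y i \<or> (r \<in> Y i \<and> j \<in> Y r)}"

end

theory Submission
  imports Defs
begin


definition OT :: "real \<Rightarrow> real \<Rightarrow> (real \<Rightarrow> real) \<Rightarrow> int \<Rightarrow> real \<Rightarrow> bool" where
  "OT e0 d f m c \<longleftrightarrow> c > 0 \<and> (\<exists>G e1. 0 < G \<and> 0 < e1 \<and> e1 \<le> e0 \<and>
     (\<forall>x. 0 < x \<and> x \<le> e1 \<longrightarrow> \<bar>f x - c * x powr m\<bar> \<le> G * x powr (m + d)))"

lemma OTI: "c > 0 \<Longrightarrow> 0 < G \<Longrightarrow> 0 < e1 \<Longrightarrow> e1 \<le> e0 \<Longrightarrow>
  (\<And>x. 0 < x \<Longrightarrow> x \<le> e1 \<Longrightarrow> \<bar>f x - c * x powr m\<bar> \<le> G * x powr (m + d)) \<Longrightarrow> OT e0 d f m c"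
  unfolding OT_def by blast

lemma OTE: assumes "OT e0 d f m c"
  obtains G e1 where "c > 0" "0 < G" "0 < e1" "e1 \<le> e0"
    "\<And>x. 0 < x \<Longrightarrow> x \<le> e1 \<Longrightarrow> \<bar>f x - c * x powr m\<bar> \<le> G * x powr (m + d)"
  using assms unfolding OT_def by blast

lemma OT_cong: "OT e0 d f m c \<Longrightarrow> (\<And>x. 0 < x \<Longrightarrow> x \<le> e0 \<Longrightarrow> f x = g x) \<Longrightarrow> OT e0 d g m c"
proof -
  assume f: "OT e0 d f m c" and fg: "\<And>x. 0 < x \<Longrightarrow> x \<le> e0 \<Longrightarrow> f x = g x"
  obtain G e1 where 1: "c > 0" "0 < G" "0 < e1" "e1 \<le> e0"
    "\<And>x. 0 < x \<Longrightarrow> x \<le> e1 \<Longrightarrow> \<bar>f x - c * x powr m\<bar> \<le> G * x powr (m + d)"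
    using OTE[OF f] by blast
  show ?thesis
  proof (rule OTI[of c G e1])
    fix x assume x: "0 < x" "x \<le> e1"
    then have "f x = g x" using fg 1 by auto
    then show "\<bar>g x - c * x powr m\<bar> \<le> G * x powr (m + d)" using 1(5)[OF x] by simp
  qed (use 1(1-4) in auto)
qed

lemma OT_add_eq:
  assumes "OT e0 d f m c1" "OT e0 d g m c2"
  shows "OT e0 d (\<lambda>x. f x + g x) m (c1 + c2)"
proof -
  obtain G1 e1 where 1: "c1 > 0" "0 < G1" "0 < e1" "e1 \<le> e0"
    "\<And>x. 0 < x \<Longrightarrow> x \<le> e1 \<Longrightarrow> \<bar>f x - c1 * x powr m\<bar> \<le> G1 * x powr (m + d)"
    using OTE[OF assms(1)] by blast
  obtain G2 e2 where 2: "c2 > 0" "0 < G2" "0 < e2" "e2 \<le> e0"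
    "\<And>x. 0 < x \<Longrightarrow> x \<le> e2 \<Longrightarrow> \<bar>g x - c2 * x powr m\<bar> \<le> G2 * x powr (m + d)"
    using OTE[OF assms(2)] by blast
  show ?thesis
  proof (rule OTI[of _ "G1+G2" "min e1 e2"])
    fix x assume x: "0 < x" "x \<le> min e1 e2"
    have a: "\<bar>f x - c1 * x powr m\<bar> \<le> G1 * x powr (m + d)" using 1(5)[of x] 1(1-4) x by auto
    have b: "\<bar>g x - c2 * x powr m\<bar> \<le> G2 * x powr (m + d)" using 2(5)[of x] 2(1-4) x by auto
    show "\<bar>f x + g x - (c1 + c2) * x powr m\<bar> \<le> (G1 + G2) * x powr (m + d)"
    proof -
      have "f x + g x - (c1 + c2) * x powr m = (f x - c1 * x powr m) + (g x - c2 * x powr m)"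
        by (simp add: algebra_simps)
      then have "\<bar>f x + g x - (c1 + c2) * x powr m\<bar> \<le> \<bar>f x - c1 * x powr m\<bar> + \<bar>g x - c2 * x powr m\<bar>"
        by (metis abs_triangle_ineq)
      then show ?thesis using a b by (simp add: distrib_right)
    qed
  qed (use 1(1-4) 2(1-4) in auto)
qed

lemma OT_add_lt:
  assumes "OT e0 d f m1 c1" "OT e0 d g m2 c2" "m1 < m2" "e0 \<le> 1" "d \<le> 1"
  shows "OT e0 d (\<lambda>x. f x + g x) m1 c1"
proof -
  obtain G1 e1 where 1: "c1 > 0" "0 < G1" "0 < e1" "e1 \<le> e0"
    "\<And>x. 0 < x \<Longrightarrow> x \<le> e1 \<Longrightarrow> \<bar>f x - c1 * x powr m1\<bar> \<le> G1 * x powr (m1 + d)"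
    using OTE[OF assms(1)] by blast
  obtain G2 e2 where 2: "c2 > 0" "0 < G2" "0 < e2" "e2 \<le> e0"
    "\<And>x. 0 < x \<Longrightarrow> x \<le> e2 \<Longrightarrow> \<bar>g x - c2 * x powr m2\<bar> \<le> G2 * x powr (m2 + d)"
    using OTE[OF assms(2)] by blast
  show ?thesis
  proof (rule OTI[of _ "G1+c2+G2" "min e1 e2"])
    fix x assume x: "0 < x" "x \<le> min e1 e2"
    have x1: "x \<le> 1" using x 1 assms by auto
    have a: "\<bar>f x - c1 * x powr m1\<bar> \<le> G1 * x powr (m1 + d)" using 1(5)[of x] 1(1-4) x by auto
    have b: "\<bar>g x - c2 * x powr m2\<bar> \<le> G2 * x powr (m2 + d)" using 2(5)[of x] 2(1-4) x by auto
    have m: "real_of_int m1 + d \<le> real_of_int m2" using assms by linarith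
    have p1: "x powr m2 \<le> x powr (m1 + d)" by (rule powr_mono'[OF m]) (use x x1 in auto)
    have p2: "x powr (m2 + d) \<le> x powr (m1 + d)" by (rule powr_mono') (use x x1 m assms(3) in auto)
    have "\<bar>g x\<bar> \<le> c2 * x powr m2 + G2 * x powr (m2 + d)" proof -
      have "0 \<le> c2 * x powr m2" using 2(1) by simp
      then show ?thesis using b by linarith
    qed
    also have "\<dots> \<le> c2 * x powr (m1 + d) + G2 * x powr (m1 + d)"
      using p1 p2 2 by (intro add_mono mult_left_mono) auto
    finally have gb: "\<bar>g x\<bar> \<le> (c2 + G2) * x powr (m1 + d)" by (simp add: algebra_simps)
    show "\<bar>f x + g x - c1 * x powr m1\<bar> \<le> (G1 + c2 + G2) * x powr (m1 + d)"
    proof -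
      have "f x + g x - c1 * x powr m1 = (f x - c1 * x powr m1) + g x"
        by (simp add: algebra_simps)
      then have "\<bar>f x + g x - c1 * x powr m1\<bar> \<le> \<bar>f x - c1 * x powr m1\<bar> + \<bar>g x\<bar>"
        by (metis abs_triangle_ineq)
      then show ?thesis using a gb by (simp add: distrib_right)
    qed
  qed (use 1(1-4) 2(1-4) in auto)
qed

lemma mult_aux:
  fixes f g A B D c1 c2 G1 G2 :: real
  assumes a: "\<bar>f - c1*A\<bar> \<le> G1*(A*D)" and b: "\<bar>g - c2*B\<bar> \<le> G2*(B*D)"
    and pos: "0 \<le> A" "0 \<le> B" "0 \<le> D" "D \<le> 1" "0 < c1" "0 < c2" "0 < G1" "0 < G2"
  shows "\<bar>f*g - c1*c2*(A*B)\<bar> \<le> (G1*(c2+G2)+c1*G2)*(A*B*D)"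
proof -
  have "G2*(B*D) \<le> G2 * B" using pos by (simp add: mult_left_le)
  moreover have "0 \<le> c2*B" using pos by simp
  ultimately have gb: "\<bar>g\<bar> \<le> (c2+G2)*B" using b unfolding distrib_right abs_le_iff by linarith
  have e: "f*g - c1*c2*(A*B) = (f - c1*A)*g + c1*A*(g - c2*B)" by (simp add: algebra_simps)
  have t1: "\<bar>(f - c1*A)*g\<bar> \<le> (G1*(A*D))*((c2+G2)*B)"
    unfolding abs_mult by (rule mult_mono) (use a gb pos in auto)
  have t2: "\<bar>c1*A*(g - c2*B)\<bar> \<le> (c1*A)*(G2*(B*D))"
    unfolding abs_mult using b pos by (simp add: mult_left_mono)
  have "\<bar>f*g - c1*c2*(A*B)\<bar> \<le> (G1*(A*D))*((c2+G2)*B) + (c1*A)*(G2*(B*D))"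
    unfolding e using t1 t2 abs_triangle_ineq order_trans add_mono by fastforce
  also have "\<dots> = (G1*(c2+G2)+c1*G2)*(A*B*D)" by (simp add: algebra_simps)
  finally show ?thesis .
qed

lemma div_aux:
  fixes f g A B D c1 c2 G1 G2 :: real
  assumes a: "\<bar>f - c1*A\<bar> \<le> G1*(A*D)" and b: "\<bar>g - c2*B\<bar> \<le> G2*(B*D)"
    and pos: "0 < A" "0 < B" "0 \<le> D" "G2 * D \<le> c2/2" "0 < c1" "0 < c2" "0 < G1" "0 < G2"
  shows "\<bar>f/g - c1/c2*(A/B)\<bar> \<le> (2*(c2*G1+c1*G2)/c2^2)*(A/B*D)"
proof -
  have "G2*(B*D) \<le> c2/2 * B" using pos mult_right_mono[OF pos(4), of B] by (simp add: algebra_simps)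
  hence gl: "g \<ge> c2/2*B" using b unfolding abs_le_iff by linarith
  have gpos: "g > 0" using gl pos by (smt (verit) mult_pos_pos half_gt_zero)
  define Nu where "Nu = c2*B*(f - c1*A) - c1*A*(g - c2*B)"
  have e: "f/g - c1/c2*(A/B) = Nu / (g*c2*B)" unfolding Nu_def using gpos pos
    by (simp add: field_simps)
  have t1: "\<bar>c2*B*(f - c1*A)\<bar> \<le> c2*B*(G1*(A*D))"
    unfolding abs_mult using a pos by (simp add: mult_left_mono)
  have t2: "\<bar>c1*A*(g - c2*B)\<bar> \<le> c1*A*(G2*(B*D))"
    unfolding abs_mult using b pos by (simp add: mult_left_mono)
  have nb: "\<bar>Nu\<bar> \<le> (c2*G1+c1*G2)*(A*B*D)"
  proof -
    have "\<bar>Nu\<bar> \<le> c2*B*(G1*(A*D)) + c1*A*(G2*(B*D))" unfolding Nu_def using t1 t2 by linarith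
    also have "\<dots> = (c2*G1+c1*G2)*(A*B*D)" by (simp add: algebra_simps)
    finally show ?thesis .
  qed
  have dl: "g*c2*B \<ge> c2/2*B*c2*B" using gl pos by (simp add: mult_right_mono)
  have dpos: "c2/2*B*c2*B > 0" using pos by simp
  have "\<bar>Nu / (g*c2*B)\<bar> = \<bar>Nu\<bar> / (g*c2*B)" using gpos pos by simp
  also have "\<dots> \<le> \<bar>Nu\<bar> / (c2/2*B*c2*B)"
    by (rule divide_left_mono) (use dl dpos in auto)
  also have "\<dots> \<le> (c2*G1+c1*G2)*(A*B*D) / (c2/2*B*c2*B)"
    by (rule divide_right_mono) (use nb dpos in auto)
  also have "\<dots> = (2*(c2*G1+c1*G2)/c2^2)*(A/B*D)" using pos by (simp add: field_simps power2_eq_square)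
  finally show ?thesis using e by simp
qed

lemma OT_mult:
  assumes "OT e0 d f m1 c1" "OT e0 d g m2 c2" "e0 \<le> 1" "0 < d"
  shows "OT e0 d (\<lambda>x. f x * g x) (m1 + m2) (c1 * c2)"
proof -
  obtain G1 e1 where 1: "c1 > 0" "0 < G1" "0 < e1" "e1 \<le> e0"
    "\<And>x. 0 < x \<Longrightarrow> x \<le> e1 \<Longrightarrow> \<bar>f x - c1 * x powr m1\<bar> \<le> G1 * x powr (m1 + d)"
    using OTE[OF assms(1)] by blast
  obtain G2 e2 where 2: "c2 > 0" "0 < G2" "0 < e2" "e2 \<le> e0"
    "\<And>x. 0 < x \<Longrightarrow> x \<le> e2 \<Longrightarrow> \<bar>g x - c2 * x powr m2\<bar> \<le> G2 * x powr (m2 + d)"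
    using OTE[OF assms(2)] by blast
  show ?thesis
  proof (rule OTI[of _ "G1*(c2+G2)+c1*G2" "min e1 e2"])
    fix x assume x: "0 < x" "x \<le> min e1 e2"
    have x1: "x \<le> 1" using x 1 assms by auto
    have a: "\<bar>f x - c1 * x powr m1\<bar> \<le> G1 * (x powr m1 * x powr d)" using 1(5)[of x] 1(1-4) x by (auto simp: powr_add)
    have b: "\<bar>g x - c2 * x powr m2\<bar> \<le> G2 * (x powr m2 * x powr d)" using 2(5)[of x] 2(1-4) x by (auto simp: powr_add)
    have D: "x powr d \<le> 1" using x x1 assms by (intro powr_le1) auto
    have "\<bar>f x * g x - c1 * c2 * (x powr m1 * x powr m2)\<bar> \<le> (G1*(c2+G2)+c1*G2) * (x powr m1 * x powr m2 * x powr d)"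
      by (rule mult_aux[OF a b]) (use D 1(1-4) 2(1-4) in auto)
    then show "\<bar>f x * g x - c1 * c2 * x powr real_of_int (m1 + m2)\<bar> \<le> (G1*(c2+G2)+c1*G2) * x powr (real_of_int (m1 + m2) + d)"
      by (simp add: powr_add)
  qed (use 1(1-4) 2(1-4) in \<open>auto intro!: add_pos_pos mult_pos_pos\<close>)
qed

lemma OT_div:
  assumes "OT e0 d f m1 c1" "OT e0 d g m2 c2" "e0 \<le> 1" "0 < d"
  shows "OT e0 d (\<lambda>x. f x / g x) (m1 - m2) (c1 / c2)"
proof -
  obtain G1 e1 where 1: "c1 > 0" "0 < G1" "0 < e1" "e1 \<le> e0"
    "\<And>x. 0 < x \<Longrightarrow> x \<le> e1 \<Longrightarrow> \<bar>f x - c1 * x powr m1\<bar> \<le> G1 * x powr (m1 + d)"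
    using OTE[OF assms(1)] by blast
  obtain G2 e2 where 2: "c2 > 0" "0 < G2" "0 < e2" "e2 \<le> e0"
    "\<And>x. 0 < x \<Longrightarrow> x \<le> e2 \<Longrightarrow> \<bar>g x - c2 * x powr m2\<bar> \<le> G2 * x powr (m2 + d)"
    using OTE[OF assms(2)] by blast
  define e3 where "e3 = (c2/(2*G2)) powr (1/d)"
  have e3: "e3 > 0" unfolding e3_def using 2(1-2) by simp
  show ?thesis
  proof (rule OTI[of _ "2*(c2*G1+c1*G2)/c2^2" "min e1 (min e2 e3)"])
    fix x assume x: "0 < x" "x \<le> min e1 (min e2 e3)"
    have a: "\<bar>f x - c1 * x powr m1\<bar> \<le> G1 * (x powr m1 * x powr d)" using 1(5)[of x] 1(1-4) x by (auto simp: powr_add)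
    have b: "\<bar>g x - c2 * x powr m2\<bar> \<le> G2 * (x powr m2 * x powr d)" using 2(5)[of x] 2(1-4) x by (auto simp: powr_add)
    have "x powr d \<le> e3 powr d" using x assms by (intro powr_mono2) auto
    also have "\<dots> = c2/(2*G2)" unfolding e3_def using 2(1-2) assms by (simp add: powr_powr)
    finally have "x powr d \<le> c2/(2*G2)" .
    hence D: "G2 * x powr d \<le> c2/2" using 2(1-2) by (simp add: field_simps)
    have "\<bar>f x / g x - c1 / c2 * (x powr m1 / x powr m2)\<bar> \<le> (2*(c2*G1+c1*G2)/c2^2) * (x powr m1 / x powr m2 * x powr d)"
      by (rule div_aux[OF a b]) (use D 1(1-4) 2(1-4) x in auto)
    then show "\<bar>f x / g x - c1 / c2 * x powr real_of_int (m1 - m2)\<bar> \<le> (2*(c2*G1+c1*G2)/c2^2) * x powr (real_of_int (m1 - m2) + d)"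
      by (simp add: powr_add powr_diff)
  qed (use 1(1-4) 2(1-4) e3 in \<open>auto intro!: divide_pos_pos add_pos_pos mult_pos_pos\<close>)
qed

lemma OT_add:
  assumes "OT e0 d f m1 c1" "OT e0 d g m2 c2" "e0 \<le> 1" "d \<le> 1"
  shows "\<exists>c. OT e0 d (\<lambda>x. f x + g x) (min m1 m2) c"
proof (cases m1 m2 rule: linorder_cases)
  case less then show ?thesis using OT_add_lt[OF assms(1,2) less assms(3,4)] by auto
next
  case equal then show ?thesis using OT_add_eq[OF assms(1)] assms(2) by auto
next
  case greater
  then have "OT e0 d (\<lambda>x. g x + f x) m2 c2" using OT_add_lt[OF assms(2,1) greater assms(3,4)] by auto
  then show ?thesis using greater by (auto simp: add.commute)
qed

lemma OT_sum:
  assumes "finite A" "A \<noteq> {}" "\<forall>j\<in>A. OT e0 d (f j) (m j) (c j)" "e0 \<le> 1" "d \<le> 1"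
  shows "\<exists>M C. OT e0 d (\<lambda>x. \<Sum>j\<in>A. f j x) M C \<and> (\<forall>j\<in>A. M \<le> m j)"
  using assms(1,2,3)
proof (induction A rule: finite_ne_induct)
  case (singleton x)
  then show ?case by auto
next
  case (insert x F)
  then obtain M C where MC: "OT e0 d (\<lambda>x. \<Sum>j\<in>F. f j x) M C" "\<forall>j\<in>F. M \<le> m j" by auto
  obtain c' where "OT e0 d (\<lambda>y. f x y + (\<Sum>j\<in>F. f j y)) (min (m x) M) c'"
    using OT_add[OF _ MC(1) assms(4,5), of "f x" "m x" "c x"] insert by auto
  then show ?case using insert MC(2) by (intro exI[of _ "min (m x) M"] exI[of _ c']) auto
qed

lemma powi_powr: "0 < (x::real) \<Longrightarrow> x powi l = x powr (real_of_int l)"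
  by (simp add: powr_real_of_int')

lemma exp_to_OT:
  assumes h: "has_expansion e0 f lm lp a dl G e1" and "d \<le> dl" "e0 \<le> 1" "0 < d"
  shows "OT e0 d f lm (a lm)"
proof -
  have h': "lm \<le> lp" "a lm > 0" "0 < dl" "dl \<le> 1" "0 < G" "0 < e1" "e1 \<le> e0"
    "\<And>x. 0 < x \<Longrightarrow> x \<le> e1 \<Longrightarrow> \<bar>f x - (\<Sum>l\<in>{lm..lp}. a l * x powi l)\<bar> \<le> G * x powr (real_of_int lp + dl)"
    using h unfolding has_expansion_def by auto
  define S where "S = (\<Sum>l\<in>{lm+1..lp}. \<bar>a l\<bar>)"
  have S0: "S \<ge> 0" unfolding S_def by (rule sum_nonneg) auto
  show ?thesis
  proof (rule OTI[of _ "G + S" e1])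
    fix x assume x: "0 < x" "x \<le> e1"
    have x1: "x \<le> 1" using x h' assms by auto
    have split: "{lm..lp} = insert lm {lm+1..lp}" using h' by auto
    have sp: "(\<Sum>l\<in>{lm..lp}. a l * x powi l) = a lm * x powr lm + (\<Sum>l\<in>{lm+1..lp}. a l * x powi l)"
      unfolding split using x by (simp add: powi_powr)
    have "\<bar>\<Sum>l\<in>{lm+1..lp}. a l * x powi l\<bar> \<le> (\<Sum>l\<in>{lm+1..lp}. \<bar>a l * x powi l\<bar>)"
      by (rule sum_abs)
    also have "\<dots> \<le> (\<Sum>l\<in>{lm+1..lp}. \<bar>a l\<bar> * x powr (lm + d))"
    proof (rule sum_mono)
      fix l assume l: "l \<in> {lm+1..lp}"
      have "real_of_int lm + 1 \<le> real_of_int l" using l by simp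
      hence "real_of_int lm + d \<le> real_of_int l" using h' assms by linarith
      hence "x powr l \<le> x powr (lm + d)"
        by (intro powr_mono') (use x x1 in auto)
      then show "\<bar>a l * x powi l\<bar> \<le> \<bar>a l\<bar> * x powr (lm + d)"
        using x by (simp add: powi_powr abs_mult mult_left_mono)
    qed
    also have "\<dots> = S * x powr (lm + d)" unfolding S_def by (simp add: sum_distrib_right)
    finally have t: "\<bar>\<Sum>l\<in>{lm+1..lp}. a l * x powi l\<bar> \<le> S * x powr (lm + d)" .
    have "x powr (real_of_int lp + dl) \<le> x powr (lm + d)"
      by (rule powr_mono') (use h' x x1 assms in auto)
    hence "G * x powr (real_of_int lp + dl) \<le> G * x powr (lm + d)" using h' by simp
    hence "\<bar>f x - (\<Sum>l\<in>{lm..lp}. a l * x powi l)\<bar> \<le> G * x powr (lm + d)" using h'(8)[OF x] by linarith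
    then show "\<bar>f x - a lm * x powr real_of_int lm\<bar> \<le> (G + S) * x powr (real_of_int lm + d)"
    proof -
      have "f x - a lm * x powr real_of_int lm = (f x - (\<Sum>l\<in>{lm..lp}. a l * x powi l)) + (\<Sum>l\<in>{lm+1..lp}. a l * x powi l)"
        unfolding sp by simp
      then have "\<bar>f x - a lm * x powr real_of_int lm\<bar> \<le> \<bar>f x - (\<Sum>l\<in>{lm..lp}. a l * x powi l)\<bar> + \<bar>\<Sum>l\<in>{lm+1..lp}. a l * x powi l\<bar>"
        by (metis abs_triangle_ineq)
      then show ?thesis using t \<open>\<bar>f x - (\<Sum>l\<in>{lm..lp}. a l * x powi l)\<bar> \<le> G * x powr (lm + d)\<close> by (simp add: distrib_right)
    qed
  qed (use h' S0 in auto)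
qed

lemma OT_to_exp:
  assumes "OT e0 d f m c" "0 < d" "d \<le> 1"
  shows "\<exists>G e1. has_expansion e0 f m m (\<lambda>_. c) d G e1"
proof -
  obtain G e1 where 1: "c > 0" "0 < G" "0 < e1" "e1 \<le> e0"
    "\<And>x. 0 < x \<Longrightarrow> x \<le> e1 \<Longrightarrow> \<bar>f x - c * x powr m\<bar> \<le> G * x powr (m + d)"
    using OTE[OF assms(1)] by blast
  have "\<forall>x. 0 < x \<and> x \<le> e1 \<longrightarrow> \<bar>f x - (\<Sum>l\<in>{m..m}. (\<lambda>_. c) l * x powi l)\<bar> \<le> G * x powr (real_of_int m + d)"
  proof (intro allI impI)
    fix x assume x: "0 < x \<and> x \<le> e1"
    then show "\<bar>f x - (\<Sum>l\<in>{m..m}. (\<lambda>_. c) l * x powi l)\<bar> \<le> G * x powr (real_of_int m + d)"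
      using 1(5)[of x] by (simp add: powi_powr)
  qed
  then show ?thesis unfolding has_expansion_def using 1(1-4) assms by blast
qed

definition Zf :: "real \<Rightarrow> (real \<Rightarrow> real) \<Rightarrow> bool" where
  "Zf e0 f \<longleftrightarrow> (\<forall>x. 0 < x \<and> x \<le> e0 \<longrightarrow> f x = 0)"
definition OTx :: "real \<Rightarrow> real \<Rightarrow> (real \<Rightarrow> real) \<Rightarrow> bool" where
  "OTx e0 d f \<longleftrightarrow> (\<exists>m c. OT e0 d f m c)"
definition OT0 :: "real \<Rightarrow> real \<Rightarrow> (real \<Rightarrow> real) \<Rightarrow> bool" where
  "OT0 e0 d f \<longleftrightarrow> Zf e0 f \<or> OTx e0 d f"

context fixes e0 d :: real assumes e0: "e0 \<le> 1" and d: "0 < d" "d \<le> 1"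
begin

lemma OTx_add: "OTx e0 d f \<Longrightarrow> OTx e0 d g \<Longrightarrow> OTx e0 d (\<lambda>x. f x + g x)"
proof -
  assume "OTx e0 d f" "OTx e0 d g"
  then obtain m1 c1 m2 c2 where "OT e0 d f m1 c1" "OT e0 d g m2 c2" unfolding OTx_def by blast
  from OT_add[OF this e0 d(2)] show ?thesis unfolding OTx_def by blast
qed

lemma OTx_mult: "OTx e0 d f \<Longrightarrow> OTx e0 d g \<Longrightarrow> OTx e0 d (\<lambda>x. f x * g x)"
proof -
  assume "OTx e0 d f" "OTx e0 d g"
  then obtain m1 c1 m2 c2 where "OT e0 d f m1 c1" "OT e0 d g m2 c2" unfolding OTx_def by blast
  from OT_mult[OF this e0 d(1)] show ?thesis unfolding OTx_def by blast
qed

lemma OTx_div: "OTx e0 d f \<Longrightarrow> OTx e0 d g \<Longrightarrow> OTx e0 d (\<lambda>x. f x / g x)"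
proof -
  assume "OTx e0 d f" "OTx e0 d g"
  then obtain m1 c1 m2 c2 where "OT e0 d f m1 c1" "OT e0 d g m2 c2" unfolding OTx_def by blast
  from OT_div[OF this e0 d(1)] show ?thesis unfolding OTx_def by blast
qed

lemma OTx_cong: "OTx e0 d f \<Longrightarrow> (\<And>x. 0 < x \<Longrightarrow> x \<le> e0 \<Longrightarrow> f x = g x) \<Longrightarrow> OTx e0 d g"
proof -
  assume "OTx e0 d f" and fg: "\<And>x. 0 < x \<Longrightarrow> x \<le> e0 \<Longrightarrow> f x = g x"
  then obtain m c where "OT e0 d f m c" unfolding OTx_def by blast
  from OT_cong[OF this fg] show ?thesis unfolding OTx_def by blast
qed

lemma add_OTx1: "OTx e0 d f \<Longrightarrow> OT0 e0 d g \<Longrightarrow> OTx e0 d (\<lambda>x. f x + g x)"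
proof -
  assume f: "OTx e0 d f" and g: "OT0 e0 d g"
  show ?thesis
  proof (cases "OTx e0 d g")
    case True then show ?thesis using OTx_add f by blast
  next
    case False
    then have z: "\<And>x. 0 < x \<Longrightarrow> x \<le> e0 \<Longrightarrow> g x = 0" using g unfolding OT0_def Zf_def by blast
    show ?thesis by (rule OTx_cong[OF f]) (simp add: z)
  qed
qed

lemma add_OTx2: "OT0 e0 d f \<Longrightarrow> OTx e0 d g \<Longrightarrow> OTx e0 d (\<lambda>x. f x + g x)"
proof -
  assume f: "OT0 e0 d f" and g: "OTx e0 d g"
  show ?thesis
  proof (cases "OTx e0 d f")
    case True then show ?thesis using OTx_add g by blast
  next
    case False
    then have z: "\<And>x. 0 < x \<Longrightarrow> x \<le> e0 \<Longrightarrow> f x = 0" using f unfolding OT0_def Zf_def by blast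
    show ?thesis by (rule OTx_cong[OF g]) (simp add: z)
  qed
qed

lemma add_OT0: "OT0 e0 d f \<Longrightarrow> OT0 e0 d g \<Longrightarrow> OT0 e0 d (\<lambda>x. f x + g x)"
proof -
  assume f: "OT0 e0 d f" and g: "OT0 e0 d g"
  show ?thesis
  proof (cases "OTx e0 d f")
    case True then show ?thesis using add_OTx1 g unfolding OT0_def by blast
  next
    case False
    then have z: "\<And>x. 0 < x \<Longrightarrow> x \<le> e0 \<Longrightarrow> f x = 0" using f unfolding OT0_def Zf_def by blast
    show ?thesis
    proof (cases "OTx e0 d g")
      case True
      have "OTx e0 d (\<lambda>x. f x + g x)" by (rule OTx_cong[OF True]) (simp add: z)
      then show ?thesis unfolding OT0_def by blast
    next
      case False
      then have z2: "\<And>x. 0 < x \<Longrightarrow> x \<le> e0 \<Longrightarrow> g x = 0" using g unfolding OT0_def Zf_def by blast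
      show ?thesis unfolding OT0_def Zf_def using z z2 by simp
    qed
  qed
qed

lemma mult_OT0: "OT0 e0 d f \<Longrightarrow> OT0 e0 d g \<Longrightarrow> OT0 e0 d (\<lambda>x. f x * g x)"
proof -
  assume f: "OT0 e0 d f" and g: "OT0 e0 d g"
  show ?thesis
  proof (cases "OTx e0 d f \<and> OTx e0 d g")
    case True then show ?thesis using OTx_mult unfolding OT0_def by blast
  next
    case False
    then have "(\<forall>x. 0 < x \<and> x \<le> e0 \<longrightarrow> f x = 0) \<or> (\<forall>x. 0 < x \<and> x \<le> e0 \<longrightarrow> g x = 0)"
      using f g unfolding OT0_def Zf_def by blast
    then show ?thesis unfolding OT0_def Zf_def by auto
  qed
qed

lemma div_OT0: "OT0 e0 d f \<Longrightarrow> OTx e0 d g \<Longrightarrow> OT0 e0 d (\<lambda>x. f x / g x)"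
proof -
  assume f: "OT0 e0 d f" and g: "OTx e0 d g"
  show ?thesis
  proof (cases "OTx e0 d f")
    case True then show ?thesis using OTx_div g unfolding OT0_def by blast
  next
    case False
    then have "\<forall>x. 0 < x \<and> x \<le> e0 \<longrightarrow> f x = 0" using f unfolding OT0_def Zf_def by blast
    then show ?thesis unfolding OT0_def Zf_def by auto
  qed
qed

end



lemma path_to_trancl_aux:
  fixes l :: "nat \<Rightarrow> 'a" and n :: nat
  assumes "\<forall>x\<in>S. Y x \<subseteq> S" "l 0 \<in> S" "\<forall>m\<in>{1..n}. l m \<in> Y (l (m-1))"
  shows "l n \<in> S \<and> (n \<ge> 1 \<longrightarrow> (l 0, l n) \<in> {(x,y). x\<in>S \<and> y\<in>Y x}\<^sup>+)"
  using assms(3)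
proof (induction n)
  case 0
  then show ?case using assms by auto
next
  case (Suc n)
  then have IH: "l n \<in> S" "n \<ge> 1 \<longrightarrow> (l 0, l n) \<in> {(x,y). x\<in>S \<and> y\<in>Y x}\<^sup>+" by auto
  have e: "l (Suc n) \<in> Y (l n)" using Suc.prems by force
  have ln: "l (Suc n) \<in> S" using e IH assms(1) by auto
  have edge: "(l n, l (Suc n)) \<in> {(x,y). x\<in>S \<and> y\<in>Y x}" using e IH by auto
  show ?case
  proof (cases "n = 0")
    case True then show ?thesis using edge ln by auto
  next
    case False then show ?thesis using edge ln IH by (auto intro: trancl_into_trancl)
  qed
qed

lemma trancl_to_path:
  assumes "(i,j) \<in> {(x,y). P x \<and> y \<in> Y x}\<^sup>+"
  shows "\<exists>n::nat. n \<ge> 1 \<and> (\<exists>l::nat \<Rightarrow> nat. l 0 = i \<and> l n = j \<and> (\<forall>m\<in>{1..n}. l m \<in> Y (l (m - 1))))"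
  using assms
proof (induction rule: trancl_induct)
  case (base y)
  then show ?case by (intro exI[of _ 1] conjI exI[of _ "\<lambda>k. if k = 0 then i else y"]) auto
next
  case (step y z)
  from step.IH obtain n where n: "n \<ge> 1" "\<exists>l::nat \<Rightarrow> nat. l 0 = i \<and> l n = y \<and> (\<forall>m\<in>{1..n}. l m \<in> Y (l (m - 1)))" by blast
  from n(2) obtain l :: "nat \<Rightarrow> nat" where l: "l 0 = i" "l n = y" "\<forall>m\<in>{1..n}. l m \<in> Y (l (m - 1))" by blast
  note nl = n(1) l
  show ?case
  proof (intro exI[of _ "Suc n"] conjI exI[of _ "l(Suc n := z)"])
    show "\<forall>m\<in>{1..Suc n}. (l(Suc n := z)) m \<in> Y ((l(Suc n := z)) (m - 1))"
    proof
      fix m assume m: "m \<in> {1..Suc n}"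
      show "(l(Suc n := z)) m \<in> Y ((l(Suc n := z)) (m - 1))"
      proof (cases "m = Suc n")
        case True then show ?thesis using step nl by auto
      next
        case False then show ?thesis using m nl by auto
      qed
    qed
  qed (use nl in auto)
qed

lemma red_Y_iff: "j \<in> red_Y S Y r i \<longleftrightarrow> j \<in> S \<and> j \<noteq> r \<and> (j \<in> Y i \<or> (r \<in> Y i \<and> j \<in> Y r))"
  by (simp add: red_Y_def)

lemma reduce_trancl:
  assumes YS: "\<forall>x\<in>S. Y x \<subseteq> S" and x: "x \<in> S - {r}"
    and tr: "(x, y) \<in> {(u,v). u\<in>S \<and> v\<in>Y u}\<^sup>+"
  shows "(y \<noteq> r \<longrightarrow> (x, y) \<in> {(u,v). u \<in> S - {r} \<and> v \<in> red_Y S Y r u}\<^sup>+) \<and>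
         (y = r \<longrightarrow> (\<forall>w\<in>Y r - {r}. (x, w) \<in> {(u,v). u \<in> S - {r} \<and> v \<in> red_Y S Y r u}\<^sup>+))"
  using tr
proof (induction rule: trancl_induct)
  case (base y)
  let ?E = "{(u,v). u \<in> S - {r} \<and> v \<in> red_Y S Y r u}"
  have yY: "y \<in> Y x" using base by simp
  have xS: "x \<in> S" using x by simp
  have yS: "y \<in> S" using YS xS yY by blast
  show ?case
  proof (intro conjI impI ballI)
    assume "y \<noteq> r"
    then have "y \<in> red_Y S Y r x" unfolding red_Y_iff using yS yY by blast
    then have "(x, y) \<in> ?E" using x by blast
    then show "(x, y) \<in> ?E\<^sup>+" by (rule r_into_trancl)
  next
    fix w assume yr: "y = r" and w: "w \<in> Y r - {r}"
    have "r \<in> S" using yS yr by simp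
    then have "w \<in> S" using YS w by blast
    then have "w \<in> red_Y S Y r x" unfolding red_Y_iff using w yY yr by blast
    then have "(x, w) \<in> ?E" using x by blast
    then show "(x, w) \<in> ?E\<^sup>+" by (rule r_into_trancl)
  qed
next
  case (step y z)
  let ?E = "{(u,v). u \<in> S - {r} \<and> v \<in> red_Y S Y r u}"
  have yS: "y \<in> S" and zy: "z \<in> Y y" using step(2) by auto
  have zS: "z \<in> S" using yS zy YS by blast
  show ?case
  proof (cases "y = r")
    case False
    then have IH: "(x, y) \<in> ?E\<^sup>+" using step(3) by blast
    show ?thesis
    proof (intro conjI impI ballI)
      assume "z \<noteq> r"
      then have "z \<in> red_Y S Y r y" unfolding red_Y_iff using zS zy by blast
      then have "(y, z) \<in> ?E" using False yS by blast
      then show "(x, z) \<in> ?E\<^sup>+" using IH by (rule trancl_into_trancl[rotated])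
    next
      fix w assume zr: "z = r" and w: "w \<in> Y r - {r}"
      have "w \<in> S" using YS w zS zr by blast
      then have "w \<in> red_Y S Y r y" unfolding red_Y_iff using w zy zr by blast
      then have "(y, w) \<in> ?E" using False yS by blast
      then show "(x, w) \<in> ?E\<^sup>+" using IH by (rule trancl_into_trancl[rotated])
    qed
  next
    case True
    then have IH: "\<forall>w\<in>Y r - {r}. (x, w) \<in> ?E\<^sup>+" using step(3) by blast
    have zr: "z \<in> Y r" using zy True by simp
    show ?thesis
    proof (intro conjI impI)
      assume "z \<noteq> r" then show "(x, z) \<in> ?E\<^sup>+" using IH zr by blast
    next
      assume "z = r" then show "\<forall>w\<in>Y r - {r}. (x, w) \<in> ?E\<^sup>+" using IH by blast
    qed
  qed
qed

lemma exists_out: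
  assumes "(r, j) \<in> {(u,v). u\<in>S \<and> v\<in>Y u}\<^sup>+" "j \<noteq> r"
  shows "\<exists>w\<in>Y r. w \<noteq> r"
proof -
  have "y \<noteq> r \<longrightarrow> (\<exists>w\<in>Y r. w \<noteq> r)" if "(r, y) \<in> {(u,v). u\<in>S \<and> v\<in>Y u}\<^sup>+" for y
    using that
  proof (induction rule: trancl_induct)
    case (base y) then show ?case by auto
  next
    case (step y z) then show ?case by (cases "y = r") auto
  qed
  then show ?thesis using assms by auto
qed



theorem theorem2:
  fixes N :: nat and eps0 :: real and p e :: kern and Y :: "nat \<Rightarrow> nat set"
    and lm lp :: "nat \<Rightarrow> nat \<Rightarrow> int" and a :: "nat \<Rightarrow> nat \<Rightarrow> int \<Rightarrow> real"
    and delta G eps1 :: "nat \<Rightarrow> nat \<Rightarrow> real"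
    and mm mp :: "nat \<Rightarrow> nat \<Rightarrow> int" and b :: "nat \<Rightarrow> nat \<Rightarrow> int \<Rightarrow> real"
    and ddelta dG deps1 :: "nat \<Rightarrow> nat \<Rightarrow> real"
  assumes N2: "N \<ge> 2"
    and eps0: "0 < eps0" "eps0 \<le> 1"
    and reg: "smp_regular {1..N} eps0 p e"
    and A: "condA {1..N} eps0 p Y"
    and D': "\<forall>i\<in>{1..N}. \<forall>j\<in>Y i. 0 \<le> lm i j \<and>
               has_expansion eps0 (\<lambda>eps. p eps i j) (lm i j) (lp i j) (a i j)
                 (delta i j) (G i j) (eps1 i j)"
    and E': "\<forall>i\<in>{1..N}. \<forall>j\<in>Y i.
               has_expansion eps0 (\<lambda>eps. e eps i j) (mm i j) (mp i j) (b i j)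
                 (ddelta i j) (dG i j) (deps1 i j)"
  shows "\<forall>r\<in>{1..N}.
           condA ({1..N} - {r}) eps0 (red_p p r) (red_Y {1..N} Y r)
         \<and> smp_regular ({1..N} - {r}) eps0 (red_p p r) (red_e p e r)
         \<and> condD' ({1..N} - {r}) eps0 (red_p p r) (red_Y {1..N} Y r)
         \<and> (\<forall>i\<in>{1..N} - {r}. \<forall>j\<in>red_Y {1..N} Y r i.
              \<exists>rmm rmp rb rdd rdG rde.
                has_expansion eps0 (\<lambda>eps. red_e p e r eps i j) rmm rmp rb rdd rdG rde
              \<and> rdd \<ge> Min {min (delta i' j') (ddelta i' j') | i' j'. i' \<in> {1..N} \<and> j' \<in> Y i'})"
proof
  fix r assume r: "r \<in> {1..N}"
  define d where "d = Min {min (delta i' j') (ddelta i' j') | i' j'. i' \<in> {1..N} \<and> j' \<in> Y i'}"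
  have AY: "\<forall>i\<in>{1..N}. Y i \<noteq> {} \<and> Y i \<subseteq> {1..N}" using A unfolding condA_def by blast
  have Ap: "\<And>x i j. 0 < x \<Longrightarrow> x \<le> eps0 \<Longrightarrow> i \<in> {1..N} \<Longrightarrow> j \<in> {1..N} \<Longrightarrow>
      (j \<in> Y i \<longrightarrow> p x i j > 0) \<and> (j \<notin> Y i \<longrightarrow> p x i j = 0)"
    using A unfolding condA_def by blast
  have Apath: "\<forall>i\<in>{1..N}. \<forall>j\<in>{1..N}. \<exists>n::nat. n \<ge> 1 \<and> (\<exists>l::nat \<Rightarrow> nat.
        l 0 = i \<and> l n = j \<and> (\<forall>m\<in>{1..n}. l m \<in> Y (l (m - 1))))"
    using A unfolding condA_def by blast
  have R: "\<And>x i j. 0 < x \<Longrightarrow> x \<le> eps0 \<Longrightarrow> i \<in> {1..N} \<Longrightarrow> j \<in> {1..N} \<Longrightarrow>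
      0 \<le> p x i j \<and> 0 \<le> e x i j \<and> (p x i j = 0 \<longrightarrow> e x i j = 0)"
    using reg unfolding smp_regular_def by blast
  have Rsum: "\<And>x i. 0 < x \<Longrightarrow> x \<le> eps0 \<Longrightarrow> i \<in> {1..N} \<Longrightarrow> (\<Sum>j\<in>{1..N}. p x i j) = 1"
    using reg unfolding smp_regular_def by blast
  let ?D = "{min (delta i' j') (ddelta i' j') | i' j'. i' \<in> {1..N} \<and> j' \<in> Y i'}"
  have Deq: "?D = (\<lambda>(i,j). min (delta i j) (ddelta i j)) ` (SIGMA i:{1..N}. Y i)" by (auto; fastforce)
  have finY: "finite (Y i)" if "i \<in> {1..N}" for i
    using AY that finite_subset[of "Y i" "{1..N}"] by blast
  have finD: "finite ?D" unfolding Deq using finY by (intro finite_imageI finite_SigmaI) auto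
  have "1 \<in> {1..N}" using N2 by auto
  then have neD: "?D \<noteq> {}" using AY by blast
  have dle: "\<And>i j. i \<in> {1..N} \<Longrightarrow> j \<in> Y i \<Longrightarrow> d \<le> delta i j \<and> d \<le> ddelta i j"
  proof -
    fix i j assume "i \<in> {1..N}" "j \<in> Y i"
    then have "min (delta i j) (ddelta i j) \<in> ?D" by blast
    then have "d \<le> min (delta i j) (ddelta i j)" unfolding d_def using finD by (rule Min_le[rotated])
    then show "d \<le> delta i j \<and> d \<le> ddelta i j" by simp
  qed
  have "d \<in> ?D" unfolding d_def using finD neD by (rule Min_in)
  then obtain i0 j0 where ij0: "i0 \<in> {1..N}" "j0 \<in> Y i0" "d = min (delta i0 j0) (ddelta i0 j0)" by blast
  have "0 < delta i0 j0" "delta i0 j0 \<le> 1" "0 < ddelta i0 j0" "ddelta i0 j0 \<le> 1"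
    using D' E' ij0 unfolding has_expansion_def by auto
  then have d01: "0 < d" "d \<le> 1" using ij0 by auto
  note OTl = OTx_add[OF eps0(2) d01] OTx_mult[OF eps0(2) d01] OTx_div[OF eps0(2) d01]
    add_OTx1[OF eps0(2) d01] add_OTx2[OF eps0(2) d01] add_OT0[OF eps0(2) d01]
    mult_OT0[OF eps0(2) d01] div_OT0[OF eps0(2) d01]
  have Pij: "\<And>i j. i \<in> {1..N} \<Longrightarrow> j \<in> Y i \<Longrightarrow> OT eps0 d (\<lambda>x. p x i j) (lm i j) (a i j (lm i j)) \<and> 0 \<le> lm i j"
    using D' dle exp_to_OT eps0(2) d01 by blast
  have Eij: "\<And>i j. i \<in> {1..N} \<Longrightarrow> j \<in> Y i \<Longrightarrow> OT eps0 d (\<lambda>x. e x i j) (mm i j) (b i j (mm i j))"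
    using E' dle exp_to_OT eps0(2) d01 by blast
  have P0: "OT0 eps0 d (\<lambda>x. p x i j)" if "i \<in> {1..N}" "j \<in> {1..N}" for i j
  proof (cases "j \<in> Y i")
    case True then show ?thesis using Pij that unfolding OT0_def OTx_def by blast
  next
    case False then show ?thesis using Ap that unfolding OT0_def Zf_def by blast
  qed
  have E0: "OT0 eps0 d (\<lambda>x. e x i j)" if "i \<in> {1..N}" "j \<in> {1..N}" for i j
  proof (cases "j \<in> Y i")
    case True then show ?thesis using Eij that unfolding OT0_def OTx_def by blast
  next
    case False then show ?thesis using Ap R that unfolding OT0_def Zf_def by blast
  qed
  let ?E = "{(u,v). u \<in> {1..N} \<and> v \<in> Y u}"
  have trE: "(i, j) \<in> ?E\<^sup>+" if ij: "i \<in> {1..N}" "j \<in> {1..N}" for i j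
  proof -
    from Apath ij obtain n where n: "n \<ge> 1" "\<exists>l::nat\<Rightarrow>nat. l 0 = i \<and> l n = j \<and> (\<forall>m\<in>{1..n}. l m \<in> Y (l (m - 1)))"
      by blast
    from n(2) obtain l :: "nat \<Rightarrow> nat" where nl: "l 0 = i" "l n = j" "\<forall>m\<in>{1..n}. l m \<in> Y (l (m - 1))"
      by blast
    have YS: "\<forall>x\<in>{1..N}. Y x \<subseteq> {1..N}" using AY by blast
    have "l 0 \<in> {1..N}" using nl(1) ij(1) by simp
    from path_to_trancl_aux[OF YS this nl(3)] show ?thesis using n(1) nl(1,2) by simp
  qed
  define j1 where "j1 = (if r = 1 then 2 else (1::nat))"
  have j1: "j1 \<in> {1..N}" "j1 \<noteq> r" using N2 r unfolding j1_def by auto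
  have "\<exists>w\<in>Y r. w \<noteq> r" using exists_out[OF trE[OF r j1(1)] j1(2)] .
  then have Yr_ne: "Y r - {r} \<noteq> {}" by auto
  have YrS: "Y r - {r} \<subseteq> {1..N} - {r}" using AY r by auto
  have Yr_fin: "finite (Y r - {r})" using YrS finite_subset by blast
  have onem: "1 - p x r r = (\<Sum>j\<in>Y r - {r}. p x r j)" if x: "0 < x" "x \<le> eps0" for x
  proof -
    have "(\<Sum>j\<in>{1..N}. p x r j) = p x r r + (\<Sum>j\<in>{1..N} - {r}. p x r j)"
      using r by (simp add: sum.remove)
    also have "(\<Sum>j\<in>{1..N} - {r}. p x r j) = (\<Sum>j\<in>Y r - {r}. p x r j)"
      by (rule sum.mono_neutral_right) (use YrS Ap x r in auto)
    finally show ?thesis using Rsum[OF x r] by simp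
  qed
  obtain M C where Q: "OT eps0 d (\<lambda>x. \<Sum>j\<in>Y r - {r}. p x r j) M C" and QM: "\<forall>j\<in>Y r - {r}. M \<le> lm r j"
    using OT_sum[OF Yr_fin Yr_ne _ eps0(2) d01(2), of "\<lambda>j x. p x r j" "lm r" "\<lambda>j. a r j (lm r j)"] Pij r by auto
  have Q': "OT eps0 d (\<lambda>x. 1 - p x r r) M C" by (rule OT_cong[OF Q]) (use onem in auto)
  have qpos: "1 - p x r r > 0" if x: "0 < x" "x \<le> eps0" for x
  proof -
    have "(\<Sum>j\<in>Y r - {r}. p x r j) > 0" by (rule sum_pos[OF Yr_fin Yr_ne]) (use Ap x r YrS in auto)
    then show ?thesis using onem[OF x] by simp
  qed
  have redY_ne: "red_Y {1..N} Y r i \<noteq> {}" if i: "i \<in> {1..N} - {r}" for i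
  proof -
    obtain y where y: "y \<in> Y i" using AY i by blast
    show ?thesis
    proof (cases "y = r")
      case False then show ?thesis using y AY i unfolding red_Y_def by blast
    next
      case True
      obtain w where "w \<in> Y r - {r}" using Yr_ne by blast
      then show ?thesis using True y YrS unfolding red_Y_def by blast
    qed
  qed
  have redp_pz: "(j \<in> red_Y {1..N} Y r i \<longrightarrow> red_p p r x i j > 0) \<and> (j \<notin> red_Y {1..N} Y r i \<longrightarrow> red_p p r x i j = 0)"
    if x: "0 < x" "x \<le> eps0" and i: "i \<in> {1..N} - {r}" and j: "j \<in> {1..N} - {r}" for x i j
  proof -
    have q: "1 - p x r r > 0" using qpos x by auto
    have nn: "0 \<le> p x i j" "0 \<le> p x i r" "0 \<le> p x r j" using R x i j r by auto
    have t: "0 \<le> p x i r * (p x r j / (1 - p x r r))" using nn q by simp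
    show ?thesis
    proof (intro conjI impI)
      assume "j \<in> red_Y {1..N} Y r i"
      then have "j \<in> Y i \<or> (r \<in> Y i \<and> j \<in> Y r)" unfolding red_Y_def by auto
      then show "red_p p r x i j > 0"
      proof
        assume "j \<in> Y i" then have "p x i j > 0" using Ap x i j by auto
        then show ?thesis using t unfolding red_p_def by linarith
      next
        assume "r \<in> Y i \<and> j \<in> Y r" then have "p x i r > 0" "p x r j > 0" using Ap x i j r by auto
        then have "p x i r * (p x r j / (1 - p x r r)) > 0" using q by simp
        then show ?thesis using nn unfolding red_p_def by linarith
      qed
    next
      assume "j \<notin> red_Y {1..N} Y r i"
      then have "j \<notin> Y i" "r \<notin> Y i \<or> j \<notin> Y r" using j unfolding red_Y_def by auto
      then have "p x i j = 0" "p x i r = 0 \<or> p x r j = 0" using Ap x i j r by auto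
      then show "red_p p r x i j = 0" unfolding red_p_def by auto
    qed
  qed
  have c1a: "\<forall>i\<in>{1..N} - {r}. red_Y {1..N} Y r i \<noteq> {} \<and> red_Y {1..N} Y r i \<subseteq> {1..N} - {r}"
    using redY_ne unfolding red_Y_def by blast
  have c1b: "\<forall>eps. 0 < eps \<and> eps \<le> eps0 \<longrightarrow>
        (\<forall>i\<in>{1..N} - {r}. \<forall>j\<in>{1..N} - {r}. (j \<in> red_Y {1..N} Y r i \<longrightarrow> red_p p r eps i j > 0) \<and> (j \<notin> red_Y {1..N} Y r i \<longrightarrow> red_p p r eps i j = 0))"
    using redp_pz by blast
  have c1c: "\<forall>i\<in>{1..N} - {r}. \<forall>j\<in>{1..N} - {r}. \<exists>n::nat. n \<ge> 1 \<and> (\<exists>l::nat \<Rightarrow> nat.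
        l 0 = i \<and> l n = j \<and> (\<forall>m\<in>{1..n}. l m \<in> red_Y {1..N} Y r (l (m - 1))))"
  proof (intro ballI)
    fix i j assume i: "i \<in> {1..N} - {r}" and j: "j \<in> {1..N} - {r}"
    have YS: "\<forall>x\<in>{1..N}. Y x \<subseteq> {1..N}" using AY by blast
    have "(i, j) \<in> ?E\<^sup>+" using trE i j by blast
    from reduce_trancl[OF YS i this] j
    have "(i, j) \<in> {(u,v). u \<in> {1..N} - {r} \<and> v \<in> red_Y {1..N} Y r u}\<^sup>+" by blast
    then show "\<exists>n::nat. n \<ge> 1 \<and> (\<exists>l::nat \<Rightarrow> nat. l 0 = i \<and> l n = j \<and> (\<forall>m\<in>{1..n}. l m \<in> red_Y {1..N} Y r (l (m - 1))))"
      by (rule trancl_to_path)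
  qed
  have C1: "condA ({1..N} - {r}) eps0 (red_p p r) (red_Y {1..N} Y r)"
    unfolding condA_def by (intro conjI c1a c1b c1c)
  have C2: "smp_regular ({1..N} - {r}) eps0 (red_p p r) (red_e p e r)"
    unfolding smp_regular_def
  proof (rule allI, rule impI, rule ballI, rule conjI)
    fix x i assume x: "0 < x \<and> x \<le> eps0" and i: "i \<in> {1..N} - {r}"
    show "\<forall>j\<in>{1..N} - {r}. 0 \<le> red_p p r x i j \<and> 0 \<le> red_e p e r x i j \<and> (red_p p r x i j = 0 \<longrightarrow> red_e p e r x i j = 0)"
    proof (rule ballI)
    fix j assume j: "j \<in> {1..N} - {r}"
    have q: "1 - p x r r > 0" using qpos x by auto
    have nn: "0 \<le> p x i j" "0 \<le> p x i r" "0 \<le> p x r j" "0 \<le> e x i j" "0 \<le> e x i r" "0 \<le> e x r j" "0 \<le> e x r r"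
      using R x i j r by auto
    have z: "p x i j = 0 \<longrightarrow> e x i j = 0" "p x i r = 0 \<longrightarrow> e x i r = 0" "p x r j = 0 \<longrightarrow> e x r j = 0"
      using R x i j r by auto
    have g1: "0 \<le> red_p p r x i j" unfolding red_p_def using nn q by simp
    have g2: "0 \<le> red_e p e r x i j" unfolding red_e_def using nn q by simp
    have g3: "red_p p r x i j = 0 \<longrightarrow> red_e p e r x i j = 0"
    proof
      assume "red_p p r x i j = 0"
      then have "p x i j + p x i r * (p x r j / (1 - p x r r)) = 0" unfolding red_p_def .
      moreover have "0 \<le> p x i r * (p x r j / (1 - p x r r))" using nn q by simp
      ultimately have "p x i j = 0" "p x i r * (p x r j / (1 - p x r r)) = 0" using nn by linarith+
      then have "p x i j = 0" "p x i r = 0 \<or> p x r j = 0" using q by auto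
      then show "red_e p e r x i j = 0" unfolding red_e_def using z by auto
    qed
    show "0 \<le> red_p p r x i j \<and> 0 \<le> red_e p e r x i j \<and> (red_p p r x i j = 0 \<longrightarrow> red_e p e r x i j = 0)"
      using g1 g2 g3 by blast
    qed
  next
    fix x i assume x: "0 < x \<and> x \<le> eps0" and i: "i \<in> {1..N} - {r}"
    have q: "1 - p x r r > 0" using qpos x by auto
    have s1: "(\<Sum>j\<in>{1..N} - {r}. p x i j) = 1 - p x i r"
      using Rsum[of x i] sum.remove[of "{1..N}" r "p x i"] x i r by simp
    have s2: "(\<Sum>j\<in>{1..N} - {r}. p x r j) = 1 - p x r r"
      using Rsum[of x r] sum.remove[of "{1..N}" r "p x r"] x r by simp
    have "(\<Sum>j\<in>{1..N} - {r}. red_p p r x i j) = (\<Sum>j\<in>{1..N} - {r}. p x i j) + p x i r / (1 - p x r r) * (\<Sum>j\<in>{1..N} - {r}. p x r j)"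
      unfolding red_p_def by (simp add: sum.distrib sum_distrib_left)
    also have "\<dots> = 1" unfolding s1 s2 using q by simp
    finally show "(\<Sum>j\<in>{1..N} - {r}. red_p p r x i j) = 1" .
  qed
  have redp_OT: "\<exists>m c. OT eps0 d (\<lambda>x. red_p p r x i j) m c \<and> 0 \<le> m"
    if i: "i \<in> {1..N} - {r}" and j: "j \<in> red_Y {1..N} Y r i" for i j
  proof -
    have jS: "j \<in> {1..N} - {r}" using j unfolding red_Y_def by auto
    let ?T = "\<lambda>x. p x i r * (p x r j / (1 - p x r r))"
    show ?thesis
    proof (cases "r \<in> Y i \<and> j \<in> Y r")
      case True
      have T: "OT eps0 d ?T (lm i r + (lm r j - M)) (a i r (lm i r) * (a r j (lm r j) / C))"
        by (intro OT_mult OT_div Q' eps0(2) d01(1)) (use Pij i True r in auto)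
      have Tm: "0 \<le> lm i r + (lm r j - M)" using QM Pij[of i r] True jS i by fastforce
      show ?thesis
      proof (cases "j \<in> Y i")
        case True
        have "OT eps0 d (\<lambda>x. p x i j) (lm i j) (a i j (lm i j))" "0 \<le> lm i j" using Pij i True by auto
        then obtain c where "OT eps0 d (\<lambda>x. red_p p r x i j) (min (lm i j) (lm i r + (lm r j - M))) c"
          using OT_add[OF _ T eps0(2) d01(2)] unfolding red_p_def by blast
        then show ?thesis using Tm \<open>0 \<le> lm i j\<close> by (intro exI[of _ "min (lm i j) (lm i r + (lm r j - M))"]) auto
      next
        case False
        have "OT eps0 d (\<lambda>x. red_p p r x i j) (lm i r + (lm r j - M)) (a i r (lm i r) * (a r j (lm r j) / C))"
          by (rule OT_cong[OF T]) (use Ap i jS False in \<open>auto simp: red_p_def\<close>)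
        then show ?thesis using Tm by blast
      qed
    next
      case False
      then have jY: "j \<in> Y i" using j unfolding red_Y_def by auto
      have "OT eps0 d (\<lambda>x. red_p p r x i j) (lm i j) (a i j (lm i j))"
      proof (rule OT_cong)
        show "OT eps0 d (\<lambda>x. p x i j) (lm i j) (a i j (lm i j))" using Pij i jY by auto
        fix x assume x: "0 < x" "x \<le> eps0"
        have "p x i r = 0 \<or> p x r j = 0" using False Ap[OF x] i jS r by auto
        then show "p x i j = red_p p r x i j" unfolding red_p_def by auto
      qed
      then show ?thesis using Pij i jY by blast
    qed
  qed
  have C3: "condD' ({1..N} - {r}) eps0 (red_p p r) (red_Y {1..N} Y r)"
    unfolding condD'_def
  proof (intro ballI)
    fix i j assume i: "i \<in> {1..N} - {r}" and j: "j \<in> red_Y {1..N} Y r i"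
    obtain m c where mc: "OT eps0 d (\<lambda>x. red_p p r x i j) m c" "0 \<le> m" using redp_OT[OF i j] by blast
    obtain G' e1 where "has_expansion eps0 (\<lambda>x. red_p p r x i j) m m (\<lambda>_. c) d G' e1"
      using OT_to_exp[OF mc(1) d01] by blast
    then show "\<exists>lm lp a delta G eps1. 0 \<le> lm \<and> has_expansion eps0 (\<lambda>eps. red_p p r eps i j) lm lp a delta G eps1"
      using mc(2) by blast
  qed
  have Qx: "OTx eps0 d (\<lambda>x. 1 - p x r r)" using Q' unfolding OTx_def by blast
  have rede_OT: "OTx eps0 d (\<lambda>x. red_e p e r x i j)"
    if i: "i \<in> {1..N} - {r}" and j: "j \<in> red_Y {1..N} Y r i" for i j
  proof -
    have jS: "j \<in> {1..N} - {r}" using j unfolding red_Y_def by auto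
    have iS: "i \<in> {1..N}" using i by auto
    have jS': "j \<in> {1..N}" using jS by auto
    have T1: "OT0 eps0 d (\<lambda>x. e x i j)" using E0 iS jS' .
    have T2: "OT0 eps0 d (\<lambda>x. e x i r * (p x r j / (1 - p x r r)))"
      by (intro OTl E0 P0 Qx iS jS' r)
    have T3: "OT0 eps0 d (\<lambda>x. e x r r * (p x i r / (1 - p x r r)) * (p x r j / (1 - p x r r)))"
      by (intro OTl E0 P0 Qx iS jS' r)
    have T4: "OT0 eps0 d (\<lambda>x. e x r j * (p x i r / (1 - p x r r)))"
      by (intro OTl E0 P0 Qx iS jS' r)
    show ?thesis
    proof (cases "r \<in> Y i \<and> j \<in> Y r")
      case True
      have e1: "OTx eps0 d (\<lambda>x. e x r j)" unfolding OTx_def using Eij[of r j] r True by blast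
      have p1: "OTx eps0 d (\<lambda>x. p x i r)" unfolding OTx_def using Pij[of i r] iS True by blast
      have T4x: "OTx eps0 d (\<lambda>x. e x r j * (p x i r / (1 - p x r r)))"
        by (intro OTl(2) OTl(3) e1 p1 Qx)
      have "OTx eps0 d (\<lambda>x. (e x i j + e x i r * (p x r j / (1 - p x r r))
          + e x r r * (p x i r / (1 - p x r r)) * (p x r j / (1 - p x r r)))
          + e x r j * (p x i r / (1 - p x r r)))"
        by (intro OTl(5) OTl(6) T1 T2 T3 T4x)
      then show ?thesis unfolding red_e_def by simp
    next
      case False
      then have jY: "j \<in> Y i" using j unfolding red_Y_def by auto
      have T1x: "OTx eps0 d (\<lambda>x. e x i j)" using Eij[OF iS jY] unfolding OTx_def by blast
      have "OTx eps0 d (\<lambda>x. (e x i j + e x i r * (p x r j / (1 - p x r r))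
          + e x r r * (p x i r / (1 - p x r r)) * (p x r j / (1 - p x r r)))
          + e x r j * (p x i r / (1 - p x r r)))"
        by (intro OTl(4) T1x T2 T3 T4)
      then show ?thesis unfolding red_e_def by simp
    qed
  qed
  have C4: "\<forall>i\<in>{1..N} - {r}. \<forall>j\<in>red_Y {1..N} Y r i.
              \<exists>rmm rmp rb rdd rdG rde.
                has_expansion eps0 (\<lambda>eps. red_e p e r eps i j) rmm rmp rb rdd rdG rde
              \<and> rdd \<ge> Min {min (delta i' j') (ddelta i' j') | i' j'. i' \<in> {1..N} \<and> j' \<in> Y i'}"
  proof (intro ballI)
    fix i j assume i: "i \<in> {1..N} - {r}" and j: "j \<in> red_Y {1..N} Y r i"
    obtain m c where mc: "OT eps0 d (\<lambda>x. red_e p e r x i j) m c" using rede_OT[OF i j] unfolding OTx_def by blast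
    obtain G' e1 where "has_expansion eps0 (\<lambda>x. red_e p e r x i j) m m (\<lambda>_. c) d G' e1"
      using OT_to_exp[OF mc(1) d01] by blast
    then show "\<exists>rmm rmp rb rdd rdG rde.
                has_expansion eps0 (\<lambda>eps. red_e p e r eps i j) rmm rmp rb rdd rdG rde
              \<and> rdd \<ge> Min {min (delta i' j') (ddelta i' j') | i' j'. i' \<in> {1..N} \<and> j' \<in> Y i'}"
      unfolding d_def by blast
  qed
  show "condA ({1..N} - {r}) eps0 (red_p p r) (red_Y {1..N} Y r)
         \<and> smp_regular ({1..N} - {r}) eps0 (red_p p r) (red_e p e r)
         \<and> condD' ({1..N} - {r}) eps0 (red_p p r) (red_Y {1..N} Y r)
         \<and> (\<forall>i\<in>{1..N} - {r}. \<forall>j\<in>red_Y {1..N} Y r i.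
              \<exists>rmm rmp rb rdd rdG rde.
                has_expansion eps0 (\<lambda>eps. red_e p e r eps i j) rmm rmp rb rdd rdG rde
              \<and> rdd \<ge> Min {min (delta i' j') (ddelta i' j') | i' j'. i' \<in> {1..N} \<and> j' \<in> Y i'})"
    using C1 C2 C3 C4 by blast
qed

end
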